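(* Let $N\ge2$, $n=\binom N2$, and for $y\in\mathcal{C}_n$ let $f(y)=\frac1N T(G_y)$, where $T(G)$ is the number of triangles in the graph $G$. Then $\mathcal{D}(f)\le 5n^{3/4}$ and $\mathrm{Lip}(f)\le1$.
   Context: Points $y=(y_{i,j})_{1\le i<j\le N}\in\{-1,1\}^{\binom N2}=\mathcal{C}_n$ are identified with graphs $G_y=([N],E)$ where $(i,j)\in E$ iff $y_{i,j}=1$. For $g:\mathcal{C}_n\to\mathbb{R}$, $\partial_{i} g(y)$ is half the difference of $g$ at $y$ with the $i$-th coordinate set to $+1$ and to $-1$; $\nabla g=(\partial_i g)_i$; $\mathrm{Lip}(g)=\max_{i,y}|\partial_i g(y)|$; $\mathbf{GW}(K)=\mathbb{E}\sup_{x\in K}\langle x,\Gamma\rangle$ with $\Gamma$ standard Gaussian in $\mathbb{R}^n$; $\mathcal{D}(g)=\mathbf{GW}(\{\nabla g(y):y\in\mathcal{C}_n\}\cup\{0\})$. *)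

theory Defs
  imports "HOL-Probability.Probability"
begin

definition edges :: "nat \<Rightarrow> (nat \<times> nat) set" where
  "edges N = {(i, j). 1 \<le> i \<and> i < j \<and> j \<le> N}"

definition cube :: "nat \<Rightarrow> ((nat \<times> nat) \<Rightarrow> real) set" where
  "cube N = edges N \<rightarrow>\<^sub>E {-1, 1}"

definition dpartial :: "(((nat \<times> nat) \<Rightarrow> real) \<Rightarrow> real) \<Rightarrow> nat \<times> nat \<Rightarrow> ((nat \<times> nat) \<Rightarrow> real) \<Rightarrow> real" where
  "dpartial g e y = (g (y(e := 1)) - g (y(e := -1))) / 2"

definition dgrad :: "nat \<Rightarrow> (((nat \<times> nat) \<Rightarrow> real) \<Rightarrow> real) \<Rightarrow> ((nat \<times> nat) \<Rightarrow> real) \<Rightarrow> ((nat \<times> nat) \<Rightarrow> real)" where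
  "dgrad N g y = (\<lambda>e\<in>edges N. dpartial g e y)"

definition Lip :: "nat \<Rightarrow> (((nat \<times> nat) \<Rightarrow> real) \<Rightarrow> real) \<Rightarrow> real" where
  "Lip N g = Max {\<bar>dpartial g e y\<bar> | e y. e \<in> edges N \<and> y \<in> cube N}"

definition std_gaussian :: "'i set \<Rightarrow> ('i \<Rightarrow> real) measure" where
  "std_gaussian I = PiM I (\<lambda>_. density lborel std_normal_density)"

definition GW :: "'i set \<Rightarrow> ('i \<Rightarrow> real) set \<Rightarrow> real" where
  "GW I K = (\<integral>\<Gamma>. (SUP x\<in>K. (\<Sum>e\<in>I. x e * \<Gamma> e)) \<partial>std_gaussian I)"

definition DD :: "nat \<Rightarrow> (((nat \<times> nat) \<Rightarrow> real) \<Rightarrow> real) \<Rightarrow> real" where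
  "DD N g = GW (edges N) (dgrad N g ` cube N \<union> {(\<lambda>e\<in>edges N. 0)})"

definition triangles :: "nat \<Rightarrow> ((nat \<times> nat) \<Rightarrow> real) \<Rightarrow> nat" where
  "triangles N y = card {(i, j, k). 1 \<le> i \<and> i < j \<and> j < k \<and> k \<le> N \<and>
      y (i, j) = 1 \<and> y (i, k) = 1 \<and> y (j, k) = 1}"

end

theory Submission
  imports Defs
begin


lemma phi_exp: "std_normal_density x * exp (a * x) = exp (a^2/2) * normal_density a 1 x"
  unfolding normal_density_def
  by (simp add: exp_add[symmetric] power2_eq_square algebra_simps diff_divide_distrib add_divide_distrib)

lemma gauss_int: "integrable (density lborel std_normal_density) (\<lambda>x. exp (a * x))"
  by (subst integrable_density) (auto simp: phi_exp)

lemma gauss_mgf: "(\<integral>x. exp (a * x) \<partial>density lborel std_normal_density) = exp (a^2/2)"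
  by (subst integral_density) (auto simp: phi_exp)

interpretation gps: product_sigma_finite "\<lambda>_. density lborel std_normal_density"
  unfolding product_sigma_finite_def
  by (simp add: prob_space_imp_sigma_finite prob_space_normal_density)

lemma mgf:
  fixes I :: "'i set" assumes "finite I"
  shows "integrable (std_gaussian I) (\<lambda>G. exp (\<Sum>e\<in>I. a e * G e))"
    "(\<integral>G. exp (\<Sum>e\<in>I. a e * G e) \<partial>std_gaussian I) = exp ((\<Sum>e\<in>I. (a e)^2)/2)"
proof -
  have eq: "(\<lambda>G. exp (\<Sum>e\<in>I. a e * G e)) = (\<lambda>G. \<Prod>e\<in>I. (\<lambda>e x. exp (a e * x)) e (G e))"
    using assms by (simp add: exp_sum)
  show "integrable (std_gaussian I) (\<lambda>G. exp (\<Sum>e\<in>I. a e * G e))"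
    unfolding eq std_gaussian_def using assms
    by (intro gps.product_integrable_prod gauss_int)
  show "(\<integral>G. exp (\<Sum>e\<in>I. a e * G e) \<partial>std_gaussian I) = exp ((\<Sum>e\<in>I. (a e)^2)/2)"
    unfolding eq std_gaussian_def using assms
    by (subst gps.product_integral_prod) (auto simp: gauss_int gauss_mgf exp_sum sum_divide_distrib)
qed


definition adj :: "((nat\<times>nat)\<Rightarrow>real) \<Rightarrow> nat \<Rightarrow> nat \<Rightarrow> bool" where
  "adj y a b = (if a<b then y(a,b)=1 else b<a \<and> y(b,a)=1)"

lemma tri_diff:
  assumes e: "(i,j) \<in> edges N"
  shows "real (triangles N (y((i,j):=1))) - real (triangles N (y((i,j):=-1)))
       = real (card {k\<in>{1..N}. adj y i k \<and> adj y j k})"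
proof -
  define P where "P z = {(a,b,c). 1\<le>a \<and> a<b \<and> b<c \<and> c\<le>N \<and> z(a,b)=(1::real) \<and> z(a,c)=1 \<and> z(b,c)=1}" for z
  define H where "H = {(a::nat,b::nat,c::nat). (a,b)=(i,j) \<or> (a,c)=(i,j) \<or> (b,c)=(i,j)}"
  define K where "K = {k\<in>{1..N}. adj y i k \<and> adj y j k}"
  define g where "g k = (if k<i then (k,i,j) else if k<j then (i,k,j) else (i,j,k))" for k
  have ij: "1 \<le> i" "i < j" "j \<le> N" using e by (auto simp: edges_def)
  have fin: "finite (P z)" for z
    by (rule finite_subset[of _ "{1..N}\<times>{1..N}\<times>{1..N}"]) (auto simp: P_def)
  have P0: "P (y((i,j):=-1)) = P (y((i,j):=1)) - H"
    unfolding P_def H_def by auto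
  have img: "P (y((i,j):=1)) \<inter> H = g ` K"
  proof
    show "P (y((i,j):=1)) \<inter> H \<subseteq> g ` K"
    proof
      fix t assume t: "t \<in> P (y((i,j):=1)) \<inter> H"
      obtain a b c where abc: "t = (a,b,c)" by (cases t) auto
      show "t \<in> g ` K"
      proof (cases "(a,b) = (i,j)")
        case True
        then have "t = g c" "c \<in> K" using t abc ij by (auto simp: P_def g_def K_def adj_def)
        then show ?thesis by blast
      next
        case F1: False
        show ?thesis
        proof (cases "(a,c) = (i,j)")
          case True
          then have "t = g b" "b \<in> K" using t abc ij by (auto simp: P_def g_def K_def adj_def)
          then show ?thesis by blast
        next
          case False
          then have "(b,c) = (i,j)" using F1 t abc by (auto simp: H_def)
          then have "t = g a" "a \<in> K" using t abc ij by (auto simp: P_def g_def K_def adj_def)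
          then show ?thesis by blast
        qed
      qed
    qed
    show "g ` K \<subseteq> P (y((i,j):=1)) \<inter> H"
    proof
      fix t assume "t \<in> g ` K"
      then obtain k where k: "k \<in> K" "t = g k" by blast
      then have "k \<noteq> i" "k \<noteq> j" by (auto simp: K_def adj_def)
      then show "t \<in> P (y((i,j):=1)) \<inter> H" using k ij
        by (auto simp: P_def g_def K_def adj_def H_def split: if_splits)
    qed
  qed
  have inj: "inj_on g K"
  proof
    fix k l assume "k \<in> K" "l \<in> K" "g k = g l"
    moreover have "k \<noteq> i" "k \<noteq> j" "l \<noteq> i" "l \<noteq> j" using calculation by (auto simp: K_def adj_def)
    ultimately show "k = l" by (auto simp: g_def split: if_splits)
  qed
  have "card (P (y((i,j):=1))) = card (P (y((i,j):=1)) - H) + card (P (y((i,j):=1)) \<inter> H)"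
    using fin by (metis card_Diff_subset_Int Int_lower1 card_Un_disjoint Un_Diff_Int Diff_disjoint finite_Int finite_Diff inf_commute Int_Diff_disjoint)
  then have "card (P (y((i,j):=1))) = card (P (y((i,j):=-1))) + card K"
    using P0 img card_image[OF inj] by simp
  then show ?thesis unfolding triangles_def K_def[symmetric] P_def by simp
qed

lemma arith_fin:
  assumes "N \<ge> (2::nat)"
  shows "3/4 * real N * sqrt (real N) \<le> 5 * real (N choose 2) powr (3/4)"
proof -
  have c: "real (N choose 2) = real N * (real N - 1) / 2"
    using assms by (auto simp add: choose_two field_char_0_class.of_nat_div mod_eq_0_iff_dvd of_nat_diff)
  have n4: "real N ^ 2 / 4 \<le> real (N choose 2)"
    unfolding c using assms by (simp add: power2_eq_square field_simps)
  define s where "s = sqrt (real N)"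
  have s0: "s \<ge> 0" by (simp add: s_def)
  have sN: "s ^ 2 = real N" by (simp add: s_def)
  have "(s ^ 4 / 4) powr (3/4) = s ^ 3 / 4 powr (3/4)"
  proof -
    have "(s ^ 4 / 4) powr (3/4) = (s^4) powr (3/4) / 4 powr (3/4)"
      using s0 by (simp add: powr_divide)
    also have "(s^4) powr (3/4) = s ^ 3"
    proof -
      have sp: "s > 0" using assms by (simp add: s_def)
      have "(s^4) powr (3/4) = (s powr 4) powr (3/4)" using sp by (simp add: powr_realpow)
      also have "\<dots> = s powr 3" by (simp add: powr_powr)
      also have "\<dots> = s ^ 3" using sp by (simp add: powr_realpow)
      finally show ?thesis .
    qed
    finally show ?thesis .
  qed
  moreover have "4 powr (3/4::real) \<le> 4"
    by (rule order_trans[OF powr_mono[of "3/4" 1]]) auto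
  moreover have "(s ^ 4 / 4) powr (3/4) \<le> real (N choose 2) powr (3/4)"
  proof -
    have "s ^ 4 = (s^2)^2" by simp
    then have "s^4 = real N ^ 2" using sN by simp
    then show ?thesis using n4 s0 by (intro powr_mono2) auto
  qed
  ultimately have "s^3 / 4 \<le> real (N choose 2) powr (3/4)"
    using s0 by (smt (verit) frac_le powr_gt_zero zero_le_power)
  moreover have "real N * sqrt (real N) = s ^ 3" using sN by (simp add: s_def power3_eq_cube power2_eq_square)
  ultimately show ?thesis using s0
  proof -
    assume a: "s ^ 3 / 4 \<le> real (N choose 2) powr (3 / 4)" "real N * sqrt (real N) = s ^ 3"
    have "3/4 * real N * sqrt (real N) = 3/4 * s^3" using a(2) by (simp add: mult.assoc)
    moreover have "s^3 \<ge> 0" using s0 by simp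
    ultimately show ?thesis using a(1) by linarith
  qed
qed

definition ind :: "nat set \<Rightarrow> nat \<times> nat \<Rightarrow> real" where
  "ind S e = (if fst e \<in> S \<and> snd e \<in> S then 1 else 0)"

lemma dpartial_f:
  assumes e: "(i,j) \<in> edges N" and N: "N > 0"
  shows "dpartial (\<lambda>y. real (triangles N y) / real N) (i,j) y
      = real (card {k\<in>{1..N}. adj y i k \<and> adj y j k}) / (2 * real N)"
  using tri_diff[OF e, of y] N unfolding dpartial_def
  by (simp add: diff_divide_distrib[symmetric])

lemma grad_sum:
  assumes N: "N > 0"
  shows "(\<Sum>e\<in>edges N. dgrad N (\<lambda>y. real (triangles N y) / real N) y e * G e) * (2 * real N)
     = (\<Sum>k\<in>{1..N}. \<Sum>e\<in>edges N. ind {a\<in>{1..N}. adj y a k} e * G e)"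
proof -
  have fe: "finite (edges N)"
    by (rule finite_subset[of _ "{1..N}\<times>{1..N}"]) (auto simp: edges_def)
  have "(\<Sum>e\<in>edges N. dgrad N (\<lambda>y. real (triangles N y) / real N) y e * G e) * (2 * real N)
      = (\<Sum>e\<in>edges N. real (card {k\<in>{1..N}. adj y (fst e) k \<and> adj y (snd e) k}) * G e)"
    unfolding sum_distrib_right
  proof (rule sum.cong)
    fix e assume "e \<in> edges N"
    then obtain i j where "e = (i,j)" "(i,j) \<in> edges N" by (cases e) auto
    then show "dgrad N (\<lambda>y. real (triangles N y) / real N) y e * G e * (2 * real N) =
         real (card {k \<in> {1..N}. adj y (fst e) k \<and> adj y (snd e) k}) * G e"
      using N by (simp add: dgrad_def dpartial_f)
  qed simp
  also have "\<dots> = (\<Sum>e\<in>edges N. \<Sum>k\<in>{1..N}. ind {a\<in>{1..N}. adj y a k} e * G e)"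
  proof (rule sum.cong)
    fix e assume e: "e \<in> edges N"
    then have fs: "fst e \<in> {1..N}" "snd e \<in> {1..N}" by (auto simp: edges_def)
    have "real (card {k\<in>{1..N}. adj y (fst e) k \<and> adj y (snd e) k})
        = (\<Sum>k\<in>{1..N}. ind {a\<in>{1..N}. adj y a k} e)"
      using fs by (simp add: ind_def sum.If_cases, intro arg_cong[where f=card]) auto
    then show "real (card {k\<in>{1..N}. adj y (fst e) k \<and> adj y (snd e) k}) * G e
        = (\<Sum>k\<in>{1..N}. ind {a\<in>{1..N}. adj y a k} e * G e)"
      by (simp add: sum_distrib_right)
  qed simp
  also have "\<dots> = (\<Sum>k\<in>{1..N}. \<Sum>e\<in>edges N. ind {a\<in>{1..N}. adj y a k} e * G e)"
    by (rule sum.swap)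
  finally show ?thesis .
qed

lemma grad_bound:
  assumes N: "N > 0"
  shows "\<exists>S\<in>Pow {1..N}. 2 * (\<Sum>e\<in>edges N. dgrad N (\<lambda>y. real (triangles N y) / real N) y e * G e)
           \<le> (\<Sum>e\<in>edges N. ind S e * G e)"
proof -
  define q where "q k = (\<Sum>e\<in>edges N. ind {a\<in>{1..N}. adj y a k} e * G e)" for k
  have ne: "q ` {1..N} \<noteq> {}" using N by auto
  have "Max (q ` {1..N}) \<in> q ` {1..N}" using ne by (intro Max_in) auto
  then obtain m where m: "m \<in> {1..N}" "q m = Max (q ` {1..N})" by auto
  have "(\<Sum>k\<in>{1..N}. q k) \<le> (\<Sum>k\<in>{1..N}. q m)"
    by (intro sum_mono) (auto simp: m(2))
  then have "(\<Sum>e\<in>edges N. dgrad N (\<lambda>y. real (triangles N y) / real N) y e * G e) * (2 * real N)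
      \<le> real N * q m"
    using grad_sum[OF N, of y G] by (simp add: q_def)
  then have "2 * (\<Sum>e\<in>edges N. dgrad N (\<lambda>y. real (triangles N y) / real N) y e * G e) \<le> q m"
    using N by (simp add: mult.commute mult.left_commute)
  then show ?thesis unfolding q_def by (intro bexI[of _ "{a\<in>{1..N}. adj y a m}"]) auto
qed

theorem fact1p10:
  fixes N :: nat
  assumes "N \<ge> 2"
  defines "n \<equiv> N choose 2"
  defines "f \<equiv> (\<lambda>y. real (triangles N y) / real N)"
  shows "DD N f \<le> 5 * real n powr (3/4) \<and> Lip N f \<le> 1"
proof
  have N0: "N > 0" using assms(1) by simp
  have fe: "finite (edges N)"
    by (rule finite_subset[of _ "{1..N}\<times>{1..N}"]) (auto simp: edges_def)
  have cE: "card (edges N) \<le> N * N"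
  proof -
    have "card (edges N) \<le> card ({1..N}\<times>{1..N})"
      by (rule card_mono) (auto simp: edges_def)
    then show ?thesis by simp
  qed
  have fc: "finite (cube N)" unfolding cube_def using fe by (intro finite_PiE) auto
  have e12: "(1,2) \<in> edges N" using assms(1) by (simp add: edges_def)
  have c1: "(\<lambda>e\<in>edges N. 1) \<in> cube N" by (simp add: cube_def)
  show "Lip N f \<le> 1"
  proof -
    let ?A = "{\<bar>dpartial f e y\<bar> | e y. e \<in> edges N \<and> y \<in> cube N}"
    have A: "?A = (\<lambda>(e,y). \<bar>dpartial f e y\<bar>) ` (edges N \<times> cube N)" by auto
    have finA: "finite ?A" unfolding A using fe fc by auto
    have neA: "?A \<noteq> {}" using e12 c1 by blast
    have "a \<le> 1" if "a \<in> ?A" for a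
    proof -
      obtain e y where ey: "a = \<bar>dpartial f e y\<bar>" "e \<in> edges N" using \<open>a \<in> ?A\<close> by blast
      obtain i j where ij: "e = (i,j)" by (cases e) auto
      have "card {k\<in>{1..N}. adj y i k \<and> adj y j k} \<le> card {1..N}"
        by (rule card_mono) auto
      then have "real (card {k\<in>{1..N}. adj y i k \<and> adj y j k}) \<le> real N" by simp
      then have "real (card {k\<in>{1..N}. adj y i k \<and> adj y j k}) / (2 * real N) \<le> 1"
        using N0 by (simp add: field_simps)
      then show ?thesis using ey ij dpartial_f[of i j N y] N0 unfolding f_def by simp
    qed
    then show ?thesis unfolding Lip_def using finA neA by (intro Max.boundedI) auto
  qed
  show "DD N f \<le> 5 * real n powr (3/4)"
  proof -
    interpret ps: prob_space "std_gaussian (edges N)"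
      unfolding std_gaussian_def
      by (intro prob_space_PiM prob_space_normal_density) simp
    define lam where "lam = 1 / sqrt (real N)"
    define L where "L = real N + lam^2 * (real N)^2 / 2"
    have lam0: "lam > 0" using N0 by (simp add: lam_def)
    define Ks where "Ks = dgrad N f ` cube N \<union> {(\<lambda>e\<in>edges N. 0)}"
    define X where "X G = (SUP x\<in>Ks. (\<Sum>e\<in>edges N. x e * G e))" for G :: "nat\<times>nat \<Rightarrow> real"
    define Z where "Z G = (\<Sum>S\<in>Pow {1..N}. exp (\<Sum>e\<in>edges N. (lam * ind S e) * G e))" for G :: "nat\<times>nat \<Rightarrow> real"
    have pw: "X G \<le> (L - 1 + Z G / exp L) / (2 * lam)" for G
      unfolding X_def
    proof (rule cSUP_least)
      show "Ks \<noteq> {}" by (simp add: Ks_def)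
      fix x assume x: "x \<in> Ks"
      have "\<exists>S\<in>Pow {1..N}. 2 * (\<Sum>e\<in>edges N. x e * G e) \<le> (\<Sum>e\<in>edges N. ind S e * G e)"
      proof (cases "x \<in> dgrad N f ` cube N")
        case True
        then obtain y where "x = dgrad N f y" by auto
        then show ?thesis using grad_bound[OF N0, of y G] unfolding f_def by simp
      next
        case False
        then have "x = (\<lambda>e\<in>edges N. 0)" using x by (auto simp: Ks_def)
        then show ?thesis by (intro bexI[of _ "{}"]) (auto simp: ind_def)
      qed
      then obtain S where S: "S \<in> Pow {1..N}"
        "2 * (\<Sum>e\<in>edges N. x e * G e) \<le> (\<Sum>e\<in>edges N. ind S e * G e)" by blast
      define sx where "sx = (\<Sum>e\<in>edges N. x e * G e)"
      have "2 * lam * sx \<le> lam * (\<Sum>e\<in>edges N. ind S e * G e)"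
        using S(2) lam0 unfolding sx_def by (simp add: mult.assoc)
      also have "\<dots> = (\<Sum>e\<in>edges N. (lam * ind S e) * G e)"
        by (simp add: sum_distrib_left mult.assoc)
      finally have "exp (2 * lam * sx) \<le> exp (\<Sum>e\<in>edges N. (lam * ind S e) * G e)" by simp
      also have "\<dots> \<le> Z G" unfolding Z_def
        by (rule member_le_sum[where f="\<lambda>S. exp (\<Sum>e\<in>edges N. (lam * ind S e) * G e)"]) (use S in auto)
      finally have ez: "exp (2 * lam * sx) \<le> Z G" .
      have "2 * lam * sx - L \<le> exp (2 * lam * sx - L) - 1"
        using exp_ge_add_one_self[of "2 * lam * sx - L"] by linarith
      also have "exp (2 * lam * sx - L) = exp (2 * lam * sx) / exp L" by (simp add: exp_diff)
      also have "\<dots> \<le> Z G / exp L" using ez by (simp add: divide_right_mono)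
      finally have "2 * lam * sx \<le> L - 1 + Z G / exp L" by simp
      then show "(\<Sum>e\<in>edges N. x e * G e) \<le> (L - 1 + Z G / exp L) / (2 * lam)"
        using lam0 unfolding sx_def by (simp add: field_simps)
    qed
    have intZ: "integrable (std_gaussian (edges N)) Z"
      unfolding Z_def
    proof (intro Bochner_Integration.integrable_sum)
      fix S :: "nat set"
      show "integrable (std_gaussian (edges N)) (\<lambda>G. exp (\<Sum>e\<in>edges N. lam * ind S e * G e))"
        using mgf(1)[OF fe, of "\<lambda>e. lam * ind S e"] by simp
    qed
    have "(\<integral>G. Z G \<partial>std_gaussian (edges N))
        = (\<Sum>S\<in>Pow {1..N}. exp ((\<Sum>e\<in>edges N. (lam * ind S e)^2) / 2))"
      unfolding Z_def
    proof (subst Bochner_Integration.integral_sum)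
      fix S :: "nat set"
      show "integrable (std_gaussian (edges N)) (\<lambda>G. exp (\<Sum>e\<in>edges N. lam * ind S e * G e))"
        using mgf(1)[OF fe, of "\<lambda>e. lam * ind S e"] by simp
    next
      show "(\<Sum>S\<in>Pow {1..N}. \<integral>G. exp (\<Sum>e\<in>edges N. lam * ind S e * G e) \<partial>std_gaussian (edges N))
          = (\<Sum>S\<in>Pow {1..N}. exp ((\<Sum>e\<in>edges N. (lam * ind S e)^2) / 2))"
        using mgf(2)[OF fe] by simp
    qed
    also have "\<dots> \<le> (\<Sum>S\<in>Pow {1..N}. exp (lam^2 * (real N)^2 / 2))"
    proof (rule sum_mono)
      fix S :: "nat set"
      have "(\<Sum>e\<in>edges N. (lam * ind S e)^2) \<le> (\<Sum>e\<in>edges N. lam^2)"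
        by (intro sum_mono) (auto simp: ind_def power_mult_distrib)
      also have "\<dots> = real (card (edges N)) * lam^2" by simp
      also have "\<dots> \<le> (real N)^2 * lam^2"
        using cE by (intro mult_right_mono) (auto simp: power2_eq_square simp flip: of_nat_mult)
      finally show "exp ((\<Sum>e\<in>edges N. (lam * ind S e)^2) / 2) \<le> exp (lam^2 * (real N)^2 / 2)"
        by (simp add: mult.commute)
    qed
    also have "\<dots> = 2 ^ N * exp (lam^2 * (real N)^2 / 2)"
      by (simp add: card_Pow)
    also have "\<dots> \<le> exp L"
    proof -
      have "(2::real) ^ N \<le> exp 1 ^ N"
        using exp_ge_add_one_self[of 1] by (intro power_mono) auto
      also have "\<dots> = exp (real N)" by (simp add: exp_of_nat_mult[symmetric])
      finally show ?thesis unfolding L_def by (simp add: exp_add)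
    qed
    finally have IZ: "(\<integral>G. Z G \<partial>std_gaussian (edges N)) \<le> exp L" .
    have bound: "(\<integral>G. X G \<partial>std_gaussian (edges N)) \<le> L / (2 * lam)"
    proof (cases "integrable (std_gaussian (edges N)) X")
      case True
      have "(\<integral>G. X G \<partial>std_gaussian (edges N))
          \<le> (\<integral>G. (L - 1 + Z G / exp L) / (2 * lam) \<partial>std_gaussian (edges N))"
        using True intZ pw by (intro integral_mono Bochner_Integration.integrable_divide Bochner_Integration.integrable_add) auto
      also have "\<dots> = (L - 1 + (\<integral>G. Z G \<partial>std_gaussian (edges N)) / exp L) / (2 * lam)"
      proof -
        have "(\<integral>G. (L - 1 + Z G / exp L) / (2 * lam) \<partial>std_gaussian (edges N))
            = (\<integral>G. (L - 1 + Z G / exp L) \<partial>std_gaussian (edges N)) / (2 * lam)"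
          by simp
        also have "(\<integral>G. (L - 1 + Z G / exp L) \<partial>std_gaussian (edges N))
            = (\<integral>G. (L - 1) \<partial>std_gaussian (edges N)) + (\<integral>G. Z G / exp L \<partial>std_gaussian (edges N))"
          using intZ by (intro Bochner_Integration.integral_add) auto
        finally show ?thesis by (simp add: ps.prob_space)
      qed
      also have "\<dots> \<le> L / (2 * lam)"
        using IZ lam0 by (intro divide_right_mono) (auto simp: field_simps)
      finally show ?thesis .
    next
      case False
      then have "(\<integral>G. X G \<partial>std_gaussian (edges N)) = 0" by (rule not_integrable_integral_eq)
      moreover have "L \<ge> 0" unfolding L_def by simp
      ultimately show ?thesis using lam0 by simp
    qed
    have "L / (2 * lam) = 3/4 * real N * sqrt (real N)"
      using N0 unfolding L_def lam_def by (simp add: power_divide field_simps power2_eq_square)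
    then have "(\<integral>G. X G \<partial>std_gaussian (edges N)) \<le> 5 * real n powr (3/4)"
      using bound arith_fin[OF assms(1)] unfolding n_def by linarith
    then show ?thesis unfolding DD_def GW_def X_def Ks_def .
  qed
qed

end
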